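(* Let $\{e_j\}_{j=1}^d$ be a basis of $\mathbb C^d$ and let $x\in\mathbb C^d$ be full with respect to it, i.e. $\langle x,e_j\rangle\ne0$ for all $j$. Define the linear operator $T_x:\mathbb C^d\to\mathbb C^d$ by $$T_x=\sum_{j=1}^{d-1}\Big(|\langle x,e_j\rangle|^2\, e_j\otimes e_{j+1}^*-\langle e_j,x\rangle\langle x,e_{j+1}\rangle\, e_j\otimes e_j^*\Big).$$ Then the null space of $T_x$ is exactly $\{cx: c\in\mathbb C\}$.
   Context: $\mathbb C^d$ carries the standard inner product $\langle u,v\rangle=\sum_k u_k\overline{v_k}$. For a basis vector $e_j$, $e_j^*$ denotes the linear functional $y\mapsto\langle y,e_j\rangle$, and for $u\in\mathbb C^d$ and a linear functional $\varphi$, $u\otimes\varphi$ is the operator $y\mapsto\varphi(y)u$. *)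

theory Defs
  imports "HOL-Analysis.Analysis"
begin

text \<open>C^d is modelled as complex ^ 'n with d = CARD('n). Standard inner product
  <u,v> = sum_k u_k * conj(v_k).\<close>
definition cinner :: "complex ^ 'n \<Rightarrow> complex ^ 'n \<Rightarrow> complex" where
  "cinner u v = (\<Sum>k\<in>UNIV. u $ k * cnj (v $ k))"

text \<open>u (x) phi applied to y: phi(y) u, with e_j^* y = <y, e_j>.
  T_x y = sum_{j=1}^{d-1} ( |<x,e_j>|^2 <y,e_{j+1}> e_j - <e_j,x><x,e_{j+1}> <y,e_j> e_j ).\<close>
definition T_op :: "(nat \<Rightarrow> complex ^ 'n) \<Rightarrow> complex ^ 'n \<Rightarrow> complex ^ 'n \<Rightarrow> complex ^ 'n" where
  "T_op e x y = (\<Sum>j\<in>{1..<CARD('n)}.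
      ((complex_of_real ((cmod (cinner x (e j)))\<^sup>2) * cinner y (e (j+1))) *s e j)
    - ((cinner (e j) x * cinner x (e (j+1)) * cinner y (e j)) *s e j))"

end

theory Submission
  imports Defs
begin

lemma indep_coeffs:
  fixes e :: "nat \<Rightarrow> complex ^ 'n"
  assumes inj: "inj_on e A" and indep: "vec.independent (e ` A)"
    and J: "J \<subseteq> A" "finite J"
    and s: "(\<Sum>j\<in>J. c j *s e j) = 0" and j: "j \<in> J"
  shows "c j = 0"
proof -
  have injJ: "inj_on e J" using inj J inj_on_subset by blast
  let ?u = "\<lambda>v. c (the_inv_into J e v)"
  have "(\<Sum>v\<in>e ` J. ?u v *s v) = (\<Sum>j\<in>J. ?u (e j) *s e j)"
    using sum.reindex[OF injJ] by simp
  also have "\<dots> = (\<Sum>j\<in>J. c j *s e j)"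
    by (rule sum.cong) (auto simp: the_inv_into_f_f[OF injJ])
  finally have "(\<Sum>v\<in>e ` J. ?u v *s v) = 0" using s by simp
  then have "?u (e j) = 0"
    using vec.independentD[OF indep, of "e ` J" ?u "e j"] J j by auto
  then show ?thesis by (simp add: the_inv_into_f_f[OF injJ j])
qed

lemma cinner_zero_span:
  fixes z :: "complex ^ 'n"
  assumes span: "vec.span B = UNIV" and orth: "\<forall>b\<in>B. cinner z b = 0"
  shows "z = 0"
proof -
  have sub: "vec.subspace {w. cinner z w = 0}"
    unfolding vec.subspace_def cinner_def
    by (auto simp: sum_distrib_left algebra_simps sum.distrib simp flip: sum_distrib_left)
  have "z \<in> vec.span B" using span by simp
  then have z0: "cinner z z = 0"
  proof (rule vec.span_induct[where P="\<lambda>w. cinner z w = 0"])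
    show "vec.subspace (Collect (\<lambda>w. cinner z w = 0))" using sub by simp
    show "\<And>w. w \<in> B \<Longrightarrow> cinner z w = 0" using orth by simp
  qed
  have "cinner z z = of_real (\<Sum>k\<in>UNIV. (cmod (z $ k))\<^sup>2)"
    unfolding cinner_def of_real_sum complex_norm_square by simp
  then have "(\<Sum>k\<in>UNIV. (cmod (z $ k))\<^sup>2) = 0"
    using z0 of_real_eq_0_iff by metis
  then have "\<forall>k. (cmod (z $ k))\<^sup>2 = 0"
    by (subst (asm) sum_nonneg_eq_0_iff) auto
  then show ?thesis by (simp add: vec_eq_iff)
qed

theorem mainTheorem3:
  fixes e :: "nat \<Rightarrow> complex ^ 'n" and x :: "complex ^ 'n"
  assumes inj: "inj_on e {1..CARD('n)}"
    and indep: "vec.independent (e ` {1..CARD('n)})"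
    and span: "vec.span (e ` {1..CARD('n)}) = UNIV"
    and full: "\<forall>j\<in>{1..CARD('n)}. cinner x (e j) \<noteq> 0"
  shows "{y. T_op e x y = 0} = {c *s x | c. True}"
proof -
  define d where "d = CARD('n)"
  have cnjin: "cinner u v = cnj (cinner v u)" for u v :: "complex ^ 'n"
    unfolding cinner_def by (simp add: mult.commute)
  have cm: "complex_of_real ((cmod w)\<^sup>2) = w * cnj w" for w
    using complex_norm_square[of w] by simp
  have cm2: "(complex_of_real (cmod w))\<^sup>2 = w * cnj w" for w
    using cm[of w] by simp
  define coef where "coef y j = cinner x (e j) * cnj (cinner x (e j)) * cinner y (e (j+1))
     - cnj (cinner x (e j)) * cinner x (e (j+1)) * cinner y (e j)" for y j
  have T: "T_op e x y = (\<Sum>j\<in>{1..<d}. coef y j *s e j)" for y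
    unfolding T_op_def d_def coef_def complex_norm_square vector_sub_rdistrib[symmetric]
    by (rule sum.cong[OF refl]) (simp add: cnjin[of "e _" x])
  have lin: "cinner (y - c *s x) w = cinner y w - c * cinner x w" for y c w
    unfolding cinner_def by (simp add: algebra_simps sum_subtractf sum_distrib_left)
  have linsm: "cinner (c *s x) w = c * cinner x w" for c w
    unfolding cinner_def by (simp add: algebra_simps sum_distrib_left)
  show ?thesis
  proof (intro set_eqI iffI)
    fix y assume "y \<in> {y. T_op e x y = 0}"
    then have "(\<Sum>j\<in>{1..<d}. coef y j *s e j) = 0" using T by simp
    then have c0: "coef y j = 0" if "j \<in> {1..<d}" for j
      using indep_coeffs[OF inj indep, of "{1..<d}" "coef y" j] that by (force simp: d_def)
    define a where "a j = cinner x (e j)" for j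
    define b where "b j = cinner y (e j)" for j
    have rel: "a j * b (j+1) = a (j+1) * b j" if "1 \<le> j" "j < d" for j
    proof -
      have "cnj (a j) * (a j * b (j+1) - a (j+1) * b j) = 0"
        using c0[of j] that unfolding coef_def a_def b_def by (simp add: algebra_simps)
      moreover have "a j \<noteq> 0" using full that unfolding a_def d_def by auto
      ultimately show ?thesis by simp
    qed
    define c where "c = b 1 / a 1"
    have "b j = c * a j" if "1 \<le> j" "j \<le> d" for j
      using that
    proof (induction j rule: dec_induct)
      case base
      have "a 1 \<noteq> 0" using full that unfolding a_def d_def by auto
      then show ?case unfolding c_def by simp
    next
      case (step k)
      have "a k \<noteq> 0" using full step unfolding a_def d_def by auto
      have "a k * b (k+1) = a (k+1) * b k" using rel step by simp
      also have "\<dots> = a k * (c * a (k+1))" using step by simp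
      finally show ?case using \<open>a k \<noteq> 0\<close> by simp
    qed
    then have "\<forall>w\<in>e ` {1..CARD('n)}. cinner (y - c *s x) w = 0"
      unfolding lin a_def b_def d_def by auto
    then have "y - c *s x = 0" using cinner_zero_span[OF span] by blast
    then show "y \<in> {c *s x | c. True}" by auto
  next
    fix y assume "y \<in> {c *s x | c. True}"
    then obtain c where y: "y = c *s x" by auto
    have "coef y j = 0" for j
      unfolding coef_def y linsm by (simp add: algebra_simps)
    then show "y \<in> {y. T_op e x y = 0}" using T by simp
  qed
qed

end
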